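(* Let $R=\bigoplus_{s\in S}R_s$ be an $S$-graded ring inducing $S$, where $S$ is cancellative. Then $R$ is graded von Neumann regular if and only if for every $x\in H_R$ there exists $y\in H_R$ such that $x=xyx$.
   Context: Rings are associative, not necessarily unital. Let $S$ be a partial groupoid (set with partial binary operation) and $R$ a ring with additive subgroups $R_s$ ($s\in S$) such that $R=\bigoplus_{s\in S}R_s$, $R_sR_t\subseteq R_{st}$ whenever $st$ is defined, and $R_sR_t\neq 0$ implies $st$ is defined; $R$ is then called an $S$-graded ring inducing $S$. Convention: $S$ contains an element $0$ with $R_0=0$, $S\setminus\{0\}=\{s: R_s\neq 0\}$, and $S$ is made a groupoid by setting $st=0$ when $st$ is undefined and $s0=0s=0$. $H_R=\bigcup_{s\in S}R_s$ is the set of homogeneous elements. $S$ is cancellative if for $s,t,u\in S$ each of $0\neq su=tu$ and $0\neq us=ut$ implies $s=t$. $R$ is graded von Neumann regular if $x\in xRx$ for every $x\in H_R$. *)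

theory Defs
  imports Main
begin

(* The grading monoid-like object S is modelled, following the paper's convention,
   as a (total) groupoid with zero: carrier S, operation m, zero element z, where
   "st undefined" is encoded as m s t = z. *)

definition graded_ring_inducing ::
  "'s set \<Rightarrow> ('s \<Rightarrow> 's \<Rightarrow> 's) \<Rightarrow> 's \<Rightarrow> ('s \<Rightarrow> 'a::ring set) \<Rightarrow> bool" where
  "graded_ring_inducing S m z Rg \<longleftrightarrow>
     z \<in> S \<and>
     (\<forall>s\<in>S. \<forall>t\<in>S. m s t \<in> S) \<and>
     (\<forall>s\<in>S. m s z = z \<and> m z s = z) \<and>
     (\<forall>s\<in>S. 0 \<in> Rg s \<and> (\<forall>a\<in>Rg s. \<forall>b\<in>Rg s. a + b \<in> Rg s) \<and> (\<forall>a\<in>Rg s. - a \<in> Rg s)) \<and>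
     Rg z = {0} \<and>
     (\<forall>s\<in>S. s \<noteq> z \<longrightarrow> Rg s \<noteq> {0}) \<and>
     (\<forall>s\<in>S. \<forall>t\<in>S. \<forall>a\<in>Rg s. \<forall>b\<in>Rg t. a * b \<in> Rg (m s t)) \<and>
     (\<forall>x::'a. \<exists>!f::'s \<Rightarrow> 'a. (\<forall>s. s \<notin> S \<longrightarrow> f s = 0) \<and> (\<forall>s\<in>S. f s \<in> Rg s) \<and>
                 finite {s. f s \<noteq> 0} \<and> x = sum f {s. f s \<noteq> 0})"

definition homogeneous :: "'s set \<Rightarrow> ('s \<Rightarrow> 'a set) \<Rightarrow> 'a set" where
  "homogeneous S Rg = (\<Union>s\<in>S. Rg s)"

definition cancellative :: "'s set \<Rightarrow> ('s \<Rightarrow> 's \<Rightarrow> 's) \<Rightarrow> 's \<Rightarrow> bool" where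
  "cancellative S m z \<longleftrightarrow>
     (\<forall>s\<in>S. \<forall>t\<in>S. \<forall>u\<in>S.
        (m s u \<noteq> z \<and> m s u = m t u \<longrightarrow> s = t) \<and>
        (m u s \<noteq> z \<and> m u s = m u t \<longrightarrow> s = t))"

definition graded_vNr :: "'s set \<Rightarrow> ('s \<Rightarrow> 'a::ring set) \<Rightarrow> bool" where
  "graded_vNr S Rg \<longleftrightarrow> (\<forall>x\<in>homogeneous S Rg. x \<in> {x * r * x | r. True})"

end

theory Submission
  imports Defs
begin

lemma sum_in_Rg:
  assumes "finite A" "0 \<in> R" "\<forall>a\<in>R. \<forall>b\<in>R. a + b \<in> R" "\<forall>i\<in>A. h i \<in> R"
  shows "sum h A \<in> R"
  using assms by (induction A rule: finite_induct) auto

theorem proposition4p2: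
  fixes S :: "'s set" and m :: "'s \<Rightarrow> 's \<Rightarrow> 's" and z :: 's
    and Rg :: "'s \<Rightarrow> 'a::ring set"
  assumes "graded_ring_inducing S m z Rg"
    and "cancellative S m z"
  shows "graded_vNr S Rg \<longleftrightarrow>
         (\<forall>x\<in>homogeneous S Rg. \<exists>y\<in>homogeneous S Rg. x = x * y * x)"
proof
  assume "\<forall>x\<in>homogeneous S Rg. \<exists>y\<in>homogeneous S Rg. x = x * y * x"
  then show "graded_vNr S Rg" unfolding graded_vNr_def by blast
next
  assume vnr: "graded_vNr S Rg"
  note G = assms(1)[unfolded graded_ring_inducing_def]
  note C = assms(2)[unfolded cancellative_def]
  obtain zS: "z \<in> S" and mS': "\<forall>s\<in>S. \<forall>t\<in>S. m s t \<in> S"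
    and mz': "\<forall>s\<in>S. m s z = z \<and> m z s = z"
    and Rsub: "\<forall>s\<in>S. 0 \<in> Rg s \<and> (\<forall>a\<in>Rg s. \<forall>b\<in>Rg s. a + b \<in> Rg s) \<and> (\<forall>a\<in>Rg s. - a \<in> Rg s)"
    and Rz: "Rg z = {0}"
    and Rnz: "\<forall>s\<in>S. s \<noteq> z \<longrightarrow> Rg s \<noteq> {0}"
    and Rmul': "\<forall>s\<in>S. \<forall>t\<in>S. \<forall>a\<in>Rg s. \<forall>b\<in>Rg t. a * b \<in> Rg (m s t)"
    and dec': "\<forall>x::'a. \<exists>!f::'s \<Rightarrow> 'a. (\<forall>s. s \<notin> S \<longrightarrow> f s = 0) \<and> (\<forall>s\<in>S. f s \<in> Rg s) \<and>
                 finite {s. f s \<noteq> 0} \<and> x = sum f {s. f s \<noteq> 0}"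
    using G by (elim conjE) 
  have mS: "\<And>s t. s\<in>S \<Longrightarrow> t\<in>S \<Longrightarrow> m s t \<in> S" using mS' by blast
  have mz: "\<And>s. s\<in>S \<Longrightarrow> m z s = z" using mz' by blast
  have R0: "\<And>s. s\<in>S \<Longrightarrow> 0 \<in> Rg s" using Rsub by blast
  have Radd: "\<And>s. s\<in>S \<Longrightarrow> \<forall>a\<in>Rg s. \<forall>b\<in>Rg s. a + b \<in> Rg s" using Rsub by blast
  have Rmul: "\<And>s t a b. s\<in>S \<Longrightarrow> t\<in>S \<Longrightarrow> a\<in>Rg s \<Longrightarrow> b\<in>Rg t \<Longrightarrow> a*b \<in> Rg (m s t)"
    using Rmul' by blast
  have dec: "\<And>x::'a. \<exists>!f::'s \<Rightarrow> 'a. (\<forall>s. s \<notin> S \<longrightarrow> f s = 0) \<and> (\<forall>s\<in>S. f s \<in> Rg s) \<and>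
                 finite {s. f s \<noteq> 0} \<and> x = sum f {s. f s \<noteq> 0}" using dec' by blast
  show "\<forall>x\<in>homogeneous S Rg. \<exists>y\<in>homogeneous S Rg. x = x * y * x"
  proof
    fix x assume xh: "x \<in> homogeneous S Rg"
    then obtain s where sS: "s \<in> S" and xs: "x \<in> Rg s" unfolding homogeneous_def by blast
    show "\<exists>y\<in>homogeneous S Rg. x = x * y * x"
    proof (cases "x = 0")
      case True
      then show ?thesis using zS Rz unfolding homogeneous_def by force
    next
      case False
      have snz: "s \<noteq> z" using False xs Rz by auto
      from vnr xh obtain r where xr: "x = x * r * x" unfolding graded_vNr_def by blast
      obtain f where f1: "\<forall>s. s \<notin> S \<longrightarrow> f s = 0" and f2: "\<forall>s\<in>S. f s \<in> Rg s"
        and f3: "finite {s. f s \<noteq> 0}" and f4: "r = sum f {s. f s \<noteq> 0}"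
        using dec[of r] by blast
      define F where "F = {s. f s \<noteq> 0}"
      have FS: "F \<subseteq> S" using f1 F_def by auto
      define k where "k t = m (m s t) s" for t
      define g where "g u = sum (\<lambda>t. x * f t * x) {t\<in>F. k t = u}" for u
      define I where "I = k ` F"
      have fI: "finite I" using f3 F_def I_def by simp
      have gS: "g u \<in> Rg u" if "u \<in> S" for u
        unfolding g_def
      proof (rule sum_in_Rg)
        show "finite {t \<in> F. k t = u}" using f3 F_def by simp
        show "0 \<in> Rg u" using R0 that by blast
        show "\<forall>a\<in>Rg u. \<forall>b\<in>Rg u. a + b \<in> Rg u" using Radd that by blast
        show "\<forall>i\<in>{t \<in> F. k t = u}. x * f i * x \<in> Rg u"
        proof
          fix i assume "i \<in> {t \<in> F. k t = u}"
          then have iS: "i \<in> S" and ku: "k i = u" using FS by auto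
          have "x * f i \<in> Rg (m s i)" using Rmul sS iS xs f2 by blast
          then have "x * f i * x \<in> Rg (m (m s i) s)" using Rmul mS sS iS xs by blast
          then show "x * f i * x \<in> Rg u" using ku k_def by simp
        qed
      qed
      have gout: "g u = 0" if "u \<notin> I" for u
        unfolding g_def using that I_def by (auto intro!: sum.neutral)
      have gsup: "{u. g u \<noteq> 0} \<subseteq> I" using gout by blast
      have fin_g: "finite {u. g u \<noteq> 0}" using gsup fI finite_subset by blast
      have g_out_S: "g u = 0" if "u \<notin> S" for u
      proof -
        have "u \<notin> I" using that I_def k_def FS mS sS by auto
        then show ?thesis using gout by blast
      qed
      have "sum g I = sum (\<lambda>t. x * f t * x) F"
        unfolding g_def I_def by (rule sum.group) (use f3 F_def in auto)
      also have "\<dots> = x * r * x"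
        by (simp add: f4 F_def sum_distrib_left sum_distrib_right)
      finally have sI: "sum g I = x" using xr by simp
      have "sum g I = sum g {u. g u \<noteq> 0}"
        by (rule sum.mono_neutral_right) (use fI gsup in auto)
      with sI have xg: "x = sum g {u. g u \<noteq> 0}" by simp
      define h where "h u = (if u = s then x else 0)" for u
      have hprops: "(\<forall>u. u \<notin> S \<longrightarrow> h u = 0) \<and> (\<forall>u\<in>S. h u \<in> Rg u) \<and>
                 finite {u. h u \<noteq> 0} \<and> x = sum h {u. h u \<noteq> 0}"
      proof -
        have "{u. h u \<noteq> 0} = {s}" using False h_def by auto
        then show ?thesis using sS xs R0 h_def by auto
      qed
      have gprops: "(\<forall>u. u \<notin> S \<longrightarrow> g u = 0) \<and> (\<forall>u\<in>S. g u \<in> Rg u) \<and>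
                 finite {u. g u \<noteq> 0} \<and> x = sum g {u. g u \<noteq> 0}"
        using g_out_S gS fin_g xg by blast
      have "g = h" using dec[of x] gprops hprops by (elim ex1E) blast
      then have gs: "g s = x" using h_def by simp
      have uniq: "t1 = t2" if "t1 \<in> F" "t2 \<in> F" "k t1 = s" "k t2 = s" for t1 t2
      proof -
        have t1S: "t1 \<in> S" and t2S: "t2 \<in> S" using that FS by auto
        have a: "m (m s t1) s = m (m s t2) s" using that k_def by simp
        have b: "m (m s t1) s \<noteq> z" using that k_def snz by simp
        have Cr: "\<And>a b c. a\<in>S \<Longrightarrow> b\<in>S \<Longrightarrow> c\<in>S \<Longrightarrow> m a c \<noteq> z \<Longrightarrow> m a c = m b c \<Longrightarrow> a = b"
          using C by blast
        have Cl: "\<And>a b c. a\<in>S \<Longrightarrow> b\<in>S \<Longrightarrow> c\<in>S \<Longrightarrow> m c a \<noteq> z \<Longrightarrow> m c a = m c b \<Longrightarrow> a = b"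
          using C by blast
        have e: "m s t1 = m s t2" using Cr[OF mS[OF sS t1S] mS[OF sS t2S] sS b a] .
        have "m s t1 \<noteq> z" using b mz sS by auto
        then show ?thesis using Cl[OF t1S t2S sS] e by blast
      qed
      have "{t\<in>F. k t = s} \<noteq> {}" proof assume "{t\<in>F. k t = s} = {}" then have "g s = 0" unfolding g_def by (simp only: sum.empty) then show False using gs False by simp qed
      then obtain t where tF: "t \<in> F" and kt: "k t = s" by blast
      have "{t\<in>F. k t = s} = {t}" using uniq tF kt by blast
      then have "x = x * f t * x" using gs g_def by simp
      moreover have "f t \<in> homogeneous S Rg" using tF FS f2 unfolding homogeneous_def by blast
      ultimately show ?thesis by blast
    qed
  qed
qed

end
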